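(* Let $W$ be a subset of a metric space $(X,d)$ with $\operatorname{den}(W)=\mathfrak c=2^{\aleph_0}$. Then there exists $\varepsilon_0>0$ such that for all $\varepsilon\in\,]0,\varepsilon_0[$, $$\hat{\mathcal N}^X_\varepsilon(W)=\hat{\mathcal N}_\varepsilon(W)=\hat{\mathcal M}_\varepsilon(W)=\mathcal M^*_\varepsilon(W)=\mathfrak c.$$
   Context: $\operatorname{den}(W)$ is the minimal cardinality of a dense subset of $W$. Closed balls: $B(c,r)=\{x:d(x,c)\le r\}$; $C$ is an $\varepsilon$-net for $W$ if $W\subseteq\bigcup_{c\in C}B(c,\varepsilon)$; $A$ is $\varepsilon$-distinguishable if $d(x,y)>\varepsilon$ for distinct $x,y\in A$. $\hat{\mathcal N}^A_\varepsilon(W)$ is the minimal cardinality of an $\varepsilon$-net $C\subseteq A$ for $W$; $\hat{\mathcal N}_\varepsilon(W):=\hat{\mathcal N}^W_\varepsilon(W)$; $\hat{\mathcal M}_\varepsilon(W)$ is the smallest cardinality of an $\varepsilon$-distinguishable $A\subseteq W$ that is maximal under inclusion among $\varepsilon$-distinguishable subsets of $W$; $\mathcal M^*_\varepsilon(W)$ is the smallest cardinal $\ge\operatorname{card}(A)$ for every $\varepsilon$-distinguishable $A\subseteq W$. *)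

theory Defs
  imports "HOL-Analysis.Analysis" "HOL-Library.Equipollence"
begin

text \<open>The ambient metric space (X,d) is the type 'a of class metric_space (X = UNIV, d = dist).
  Closed balls are cball c r = {x. dist c x \<le> r}.\<close>

definition dense_in :: "'a::metric_space set \<Rightarrow> 'a set \<Rightarrow> bool" where
  "dense_in W D \<longleftrightarrow> D \<subseteq> W \<and> W \<subseteq> closure D"

definition eps_net :: "real \<Rightarrow> 'a::metric_space set \<Rightarrow> 'a set \<Rightarrow> bool" where
  "eps_net \<epsilon> W C \<longleftrightarrow> W \<subseteq> (\<Union>c\<in>C. cball c \<epsilon>)"

definition eps_distinguishable :: "real \<Rightarrow> 'a::metric_space set \<Rightarrow> bool" where
  "eps_distinguishable \<epsilon> A \<longleftrightarrow> (\<forall>x\<in>A. \<forall>y\<in>A. x \<noteq> y \<longrightarrow> dist x y > \<epsilon>)"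

definition maximal_eps_distinguishable :: "real \<Rightarrow> 'a::metric_space set \<Rightarrow> 'a set \<Rightarrow> bool" where
  "maximal_eps_distinguishable \<epsilon> W A \<longleftrightarrow> A \<subseteq> W \<and> eps_distinguishable \<epsilon> A \<and>
     (\<forall>B. A \<subseteq> B \<and> B \<subseteq> W \<and> eps_distinguishable \<epsilon> B \<longrightarrow> B = A)"

definition min_card_is_continuum :: "('a set \<Rightarrow> bool) \<Rightarrow> bool" where
  "min_card_is_continuum P \<longleftrightarrow>
     (\<exists>S. P S \<and> S \<approx> (UNIV::real set)) \<and> (\<forall>S. P S \<longrightarrow> (UNIV::real set) \<lesssim> S)"

text \<open>"The smallest cardinal \<ge> card S for every S satisfying P equals the continuum":
  c is an upper bound, and no cardinal below c (represented by a subset K of the reals with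
  K strictly smaller than the reals) is an upper bound.\<close>
definition sup_card_is_continuum :: "('a set \<Rightarrow> bool) \<Rightarrow> bool" where
  "sup_card_is_continuum P \<longleftrightarrow>
     (\<forall>S. P S \<longrightarrow> S \<lesssim> (UNIV::real set)) \<and>
     (\<forall>K::real set. K \<prec> (UNIV::real set) \<longrightarrow> (\<exists>S. P S \<and> \<not> S \<lesssim> K))"

end

theory Submission
  imports Defs
begin

lemma exists_maximal:
  fixes W :: "'a::metric_space set"
  shows "\<exists>M. maximal_eps_distinguishable e W M"
proof -
  let ?A = "{B. B \<subseteq> W \<and> eps_distinguishable e B}"
  have "\<forall>C\<in>chains ?A. \<Union>C \<in> ?A"
  proof
    fix C assume C: "C \<in> chains ?A"
    have "\<Union>C \<subseteq> W" using C by (auto simp: chains_def)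
    moreover have "eps_distinguishable e (\<Union>C)"
      unfolding eps_distinguishable_def
    proof (intro ballI impI)
      fix x y assume "x \<in> \<Union>C" "y \<in> \<Union>C" "x \<noteq> y"
      then obtain X Y where XY: "X \<in> C" "Y \<in> C" "x \<in> X" "y \<in> Y" by auto
      from C XY(1,2) have "X \<subseteq> Y \<or> Y \<subseteq> X" by (auto simp: chains_def chain_subset_def)
      then obtain Z where "Z \<in> C" "x \<in> Z" "y \<in> Z" using XY by blast
      with C \<open>x \<noteq> y\<close> show "dist x y > e" by (auto simp: chains_def eps_distinguishable_def)
    qed
    ultimately show "\<Union>C \<in> ?A" by simp
  qed
  from Zorn_Lemma[OF this] obtain M where "M \<in> ?A" "\<forall>X\<in>?A. M \<subseteq> X \<longrightarrow> X = M" by blast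
  then show ?thesis unfolding maximal_eps_distinguishable_def by auto
qed

lemma maximal_net:
  fixes W :: "'a::metric_space set"
  assumes "maximal_eps_distinguishable e W M" "e > 0"
  shows "eps_net e W M"
  unfolding eps_net_def
proof
  fix w assume w: "w \<in> W"
  show "w \<in> (\<Union>c\<in>M. cball c e)"
  proof (cases "w \<in> M")
    case True then show ?thesis using assms(2) by (intro UN_I[of w]) auto
  next
    case False
    show ?thesis
    proof (rule ccontr)
      assume "\<not> ?thesis"
      then have far: "\<forall>m\<in>M. dist m w > e" by (auto simp: not_le)
      have "eps_distinguishable e (insert w M)"
        using assms(1) far unfolding maximal_eps_distinguishable_def eps_distinguishable_def
        by (auto simp: dist_commute)
      moreover have "insert w M \<subseteq> W" using assms(1) w unfolding maximal_eps_distinguishable_def by auto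
      ultimately have "insert w M = M" using assms(1) unfolding maximal_eps_distinguishable_def by blast
      with False show False by auto
    qed
  qed
qed

lemma dist_upper:
  fixes W :: "'a::metric_space set"
  assumes "dense_in W D" "e > 0" "A \<subseteq> W" "eps_distinguishable e A"
  shows "A \<lesssim> D"
proof -
  have "\<forall>a\<in>A. \<exists>d\<in>D. dist d a < e/2"
    using assms(1,2,3) unfolding dense_in_def by (meson closure_approachable half_gt_zero subsetD)
  then obtain f where f: "\<forall>a\<in>A. f a \<in> D \<and> dist (f a) a < e/2" by metis
  have "inj_on f A"
  proof (rule inj_onI, rule ccontr)
    fix a b assume ab: "a \<in> A" "b \<in> A" "f a = f b" "a \<noteq> b"
    have "dist a b \<le> dist (f a) a + dist (f b) b"
      using ab(3) by (metis dist_commute dist_triangle)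
    also have "\<dots> < e" using f ab(1,2) by (smt (verit) field_sum_of_halves)
    finally show False using assms(4) ab unfolding eps_distinguishable_def by fastforce
  qed
  then show ?thesis unfolding lepoll_def using f by blast
qed

lemma net_lower:
  fixes W :: "'a::metric_space set"
  assumes "eps_net e W C" "A \<subseteq> W" "eps_distinguishable d A" "2*e \<le> d"
  shows "A \<lesssim> C"
proof -
  have "\<forall>a\<in>A. \<exists>c\<in>C. dist c a \<le> e" using assms(1,2) unfolding eps_net_def by (fastforce simp: mem_cball)
  then obtain f where f: "\<forall>a\<in>A. f a \<in> C \<and> dist (f a) a \<le> e" by metis
  have "inj_on f A"
  proof (rule inj_onI, rule ccontr)
    fix a b assume ab: "a \<in> A" "b \<in> A" "f a = f b" "a \<noteq> b"
    have "dist a b \<le> dist (f a) a + dist (f b) b"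
      using ab(3) by (metis dist_commute dist_triangle)
    also have "\<dots> \<le> d"
    proof -
      have "dist (f a) a \<le> e" "dist (f b) b \<le> e" using f ab(1,2) by auto
      then show ?thesis using assms(4) by linarith
    qed
    finally show False using assms(3) ab unfolding eps_distinguishable_def by fastforce
  qed
  then show ?thesis unfolding lepoll_def using f by blast
qed

lemma koenig:
  fixes A :: "nat \<Rightarrow> 'a set"
  assumes "\<And>n. A n \<prec> (UNIV::real set)"
  shows "\<not> (UNIV::real set) \<lesssim> (\<Union>n. A n)"
proof
  assume "(UNIV::real set) \<lesssim> (\<Union>n. A n)"
  then have "(UNIV::nat set set) \<lesssim> (\<Union>n. A n)"
    by (rule lepoll_trans[OF eqpoll_imp_lepoll[OF nat_sets_eqpoll_reals]])
  then have "\<exists>g. (UNIV::nat set set) \<subseteq> g ` (\<Union>n. A n)" by (simp only: lepoll_iff)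
  then obtain g where g: "(UNIV::nat set set) \<subseteq> g ` (\<Union>n. A n)" by blast
  define phi :: "nat set \<Rightarrow> nat \<Rightarrow> nat set" where "phi S = (\<lambda>n. {m. prod_encode (n,m) \<in> S})" for S
  have phis: "F \<in> range phi" for F
  proof -
    have "phi {prod_encode (n,m) | n m. m \<in> F n} = F"
      unfolding phi_def by (auto simp: fun_eq_iff prod_encode_eq)
    from this[symmetric] show ?thesis by (rule range_eqI)
  qed
  have small: "(\<lambda>u. phi (g u) n) ` A n \<noteq> UNIV" for n
  proof
    assume "(\<lambda>u. phi (g u) n) ` A n = UNIV"
    then have "(UNIV::nat set set) \<lesssim> A n" using image_lepoll[of "\<lambda>u. phi (g u) n" "A n"] by simp
    then have "(UNIV::real set) \<lesssim> A n"
      by (rule lepoll_trans[OF eqpoll_imp_lepoll[OF eqpoll_sym[OF nat_sets_eqpoll_reals]]])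
    moreover have "A n \<lesssim> (UNIV::real set)" "\<not> A n \<approx> (UNIV::real set)"
      using assms[of n] by (auto simp: lesspoll_def)
    ultimately show False using lepoll_antisym by blast
  qed
  define x where "x n = (SOME s. s \<notin> (\<lambda>u. phi (g u) n) ` A n)" for n
  have xn: "x n \<notin> (\<lambda>u. phi (g u) n) ` A n" for n
    unfolding x_def by (rule someI_ex) (use small[of n] in blast)
  from phis[of x] obtain S where S: "x = phi S" by (rule rangeE)
  have "S \<in> g ` (\<Union>n. A n)" using g by blast
  then obtain u where "u \<in> (\<Union>n. A n)" "g u = S" by blast
  then have u: "u \<in> (\<Union>n. A n)" "phi (g u) = x" using S by auto
  then obtain n where "u \<in> A n" by auto
  then have "x n \<in> (\<lambda>u. phi (g u) n) ` A n" using u(2) by force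
  with xn show False by blast
qed

theorem corollary2p11:
  fixes W :: "'a::metric_space set"
  assumes "min_card_is_continuum (dense_in W)"
  shows "\<exists>\<epsilon>0>0. \<forall>\<epsilon>. 0 < \<epsilon> \<and> \<epsilon> < \<epsilon>0 \<longrightarrow>
           min_card_is_continuum (\<lambda>C. C \<subseteq> (UNIV::'a set) \<and> eps_net \<epsilon> W C) \<and>
           min_card_is_continuum (\<lambda>C. C \<subseteq> W \<and> eps_net \<epsilon> W C) \<and>
           min_card_is_continuum (maximal_eps_distinguishable \<epsilon> W) \<and>
           sup_card_is_continuum (\<lambda>A. A \<subseteq> W \<and> eps_distinguishable \<epsilon> A)"
proof -
  from assms obtain D where D: "dense_in W D" "D \<approx> (UNIV::real set)"
    and H: "\<And>S. dense_in W S \<Longrightarrow> (UNIV::real set) \<lesssim> S"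
    unfolding min_card_is_continuum_def by blast
  define A where "A n = (SOME M. maximal_eps_distinguishable (1/Suc n) W M)" for n
  have An: "maximal_eps_distinguishable (1/Suc n) W (A n)" for n
    unfolding A_def by (rule someI_ex) (rule exists_maximal)
  have "dense_in W (\<Union>n. A n)"
    unfolding dense_in_def
  proof
    show "(\<Union>n. A n) \<subseteq> W" using An unfolding maximal_eps_distinguishable_def by blast
    show "W \<subseteq> closure (\<Union>n. A n)"
    proof
      fix w assume w: "w \<in> W"
      show "w \<in> closure (\<Union>n. A n)"
        unfolding closure_approachable
      proof (intro allI impI)
        fix e :: real assume "e > 0"
        then obtain n where n: "1 / real (Suc n) < e" using nat_approx_posE by blast
        have "eps_net (1/Suc n) W (A n)" using maximal_net[OF An] by simp
        then obtain m where "m \<in> A n" "dist m w \<le> 1/Suc n" using w unfolding eps_net_def by auto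
        then show "\<exists>y\<in>\<Union>n. A n. dist y w < e" using n by force
      qed
    qed
  qed
  from H[OF this] koenig[of A] obtain n where nsm: "\<not> A n \<prec> (UNIV::real set)" by blast
  have DR: "D \<lesssim> (UNIV::real set)" using D(2) eqpoll_imp_lepoll by blast
  have "A n \<lesssim> D" using dist_upper[OF D(1), of "1/Suc n" "A n"] An[of n]
    unfolding maximal_eps_distinguishable_def by auto
  then have "A n \<lesssim> (UNIV::real set)" using DR lepoll_trans by blast
  with nsm have "A n \<approx> (UNIV::real set)" by (auto simp: lesspoll_def)
  then have RA: "(UNIV::real set) \<lesssim> A n" using eqpoll_sym eqpoll_imp_lepoll by blast
  have AnW: "A n \<subseteq> W" "eps_distinguishable (1/Suc n) (A n)"
    using An[of n] unfolding maximal_eps_distinguishable_def by auto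
  show ?thesis
  proof (intro exI[of _ "1/(2*Suc n)"] conjI allI impI)
    show "(0::real) < 1/(2*Suc n)" by simp
    fix e :: real assume e: "0 < e \<and> e < 1/(2*Suc n)"
    have e2: "2*e \<le> 1/Suc n" using e by (simp add: field_simps)
    have low: "(UNIV::real set) \<lesssim> C" if "eps_net e W C" for C
      using net_lower[OF that AnW e2] RA lepoll_trans by blast
    have up: "B \<lesssim> (UNIV::real set)" if "B \<subseteq> W" "eps_distinguishable e B" for B
      using dist_upper[OF D(1) _ that] e DR lepoll_trans by blast
    obtain M where M: "maximal_eps_distinguishable e W M" using exists_maximal by blast
    have Mnet: "eps_net e W M" using maximal_net M e by blast
    have MW: "M \<subseteq> W" "eps_distinguishable e M" using M unfolding maximal_eps_distinguishable_def by auto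
    have Meq: "M \<approx> (UNIV::real set)" using lepoll_antisym up[OF MW] low[OF Mnet] by blast
    show "min_card_is_continuum (\<lambda>C. C \<subseteq> (UNIV::'a set) \<and> eps_net e W C)"
      unfolding min_card_is_continuum_def using Meq Mnet low by blast
    show "min_card_is_continuum (\<lambda>C. C \<subseteq> W \<and> eps_net e W C)"
      unfolding min_card_is_continuum_def using Meq Mnet MW low by blast
    show "min_card_is_continuum (maximal_eps_distinguishable e W)"
      unfolding min_card_is_continuum_def using Meq M low maximal_net e by blast
    show "sup_card_is_continuum (\<lambda>A. A \<subseteq> W \<and> eps_distinguishable e A)"
      unfolding sup_card_is_continuum_def
    proof (intro conjI allI impI)
      fix B assume "B \<subseteq> W \<and> eps_distinguishable e B"
      then show "B \<lesssim> (UNIV::real set)" using up by blast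
    next
      fix K :: "real set" assume K: "K \<prec> (UNIV::real set)"
      show "\<exists>S. (S \<subseteq> W \<and> eps_distinguishable e S) \<and> \<not> S \<lesssim> K"
      proof (intro exI conjI)
        show "M \<subseteq> W" "eps_distinguishable e M" using MW by auto
        show "\<not> M \<lesssim> K"
        proof
          assume "M \<lesssim> K"
          then have "(UNIV::real set) \<lesssim> K" using low[OF Mnet] lepoll_trans by blast
          then show False using K lepoll_antisym by (auto simp: lesspoll_def)
        qed
      qed
    qed
  qed
qed

end
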